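(* Consider the networked closed-loop system described in the context. Assume: $Q,R,T$ are positive definite; $(Q^{1/2},A)$ is observable; $\rho(A-BK)<1$ and $\rho(A-B\bar K)<1$; $P=(A-B\bar K)^\top P(A-B\bar K)+Q+\bar K^\top R\bar K$; and the network satisfies $\mathrm{Prob}\big(\bigcap_{t\ge k}\{\gamma_{t-1}\theta_t=0\}\big)=0$ for all $k\ge0$. Suppose there exists $k_0$ such that $\gamma_{k_0-1}=1$, $\theta_{k_0}=1$, $x(k_0)-x_n(k_0)\in\mathbb{Z}_K$, and the MPC optimization problem is feasible. If the consistent actuator and the ancillary controller are used, then the MPC optimization problem is feasible and $x(k)\in\mathbb{X}$ and $u(k)\in\mathbb{U}$ for all $k\ge k_0$.
   Context: Plant: $x(k+1)=Ax(k)+Bu(k)+w(k)$ with $x(k)\in\mathbb{R}^{n_x}$, $u(k)\in\mathbb{R}^{n_u}$, $(A,B)$ stabilizable, and $w(k)\in\mathbb{W}=\{w: H_w w\le h_w\}$ for all $k$, where $\mathbb{W}$ is compact and contains the origin in its interior. State and input constraint sets $\mathbb{X}=\{x:H_x x\le h_x\}$, $\mathbb{U}=\{u:H_u u\le h_u\}$ are bounded and contain the origin in their interior. $\oplus$ is the Minkowski sum, $\ominus$ the Pontryagin difference, $M\mathbb{P}=\{Mp:p\in\mathbb{P}\}$. Network: binary variables $\theta_k$ ($=1$ iff the packet $U_k$ sent by the remote controller at time $k$ is received by the plant) and $\gamma_k$ ($=1$ iff the packet $X_k$ sent by the plant at time $k$ is received by the controller). Sets: $\mathbb{Z}_K=\bigoplus_{i=0}^\infty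 (A-BK)^i\mathbb{W}$; $\mathbb{X}_c=\mathbb{X}\ominus\mathbb{Z}_K$, $\mathbb{U}_c=\mathbb{U}\ominus(-K)\mathbb{Z}_K$. With $x_a=(x_n,\bar x,\bar u)$ and $A_a=\begin{bmatrix}A-B\bar K & B\bar K & B\\ 0& I&0\\0&0&I\end{bmatrix}$, $X_{f,\bar K}=\{x_a: A_a^k x_a\in\mathbb{X}_{a,\bar K}\ \forall k\ge0\}$ where $\mathbb{X}_{a,\bar K}=\{x_a: x_n\in\mathbb{X}_c,\ \bar u-\bar K(x_n-\bar x)\in\mathbb{U}_c\}$; for fixed $\lambda\in(0,1)$, $X^\lambda_{f,\bar K}=X_{f,\bar K}\cap\{(x_n,\bar x,\bar u):\bar x\in\lambda\mathbb{X}_c,\ \bar u\in\lambda\mathbb{U}_c\}$. Remote MPC at time $k$ (horizon $N$, reference $x_r$): minimize over $\mathbf{u}(0),\dots,\mathbf{u}(N-1),\bar x,\bar u$ the cost $\sum_{i=0}^{N-1}(\|\mathbf{x}(i)-\bar x\|_Q^2+\|\mathbf{u}(i)-\bar u\|_R^2)+\|\mathbf{x}(N)-\bar x\|_P^2+\|\bar x-x_r\|_T^2$ subject to $\mathbf{x}(i+1)=A\mathbf{x}(i)+B\mathbf{u}(i)$, $\mathbf{x}(i)\in\mathbb{X}_c$, $\mathbf{u}(i)\in\mathbb{U}_c$ for $i=0,\dots,N-1$, $\mathbf{x}(0)=\hat x(k|k-1)$, $(\mathbf{x}(N),\bar x,\bar u)\in X^\lambda_{f,\bar K}$, $(A-I)\bar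 x+B\bar u=0$. With optimal solution $\mathbf{u}^*_k,\bar x^*_k,\bar u^*_k$, the controller sends $U_k=\{\mathbf{u}^*_k,\ \bar u^*_k+\bar K\bar x^*_k,\ q_k\}$. Local side: $\Theta_k=\prod_{i=q_k+1}^k\theta_i$ if $\theta_k=1$ and $\Theta_k=0$ otherwise; $s_k=\Theta_k k+(1-\Theta_k)s_{k-1}$. Consistent actuator: $u_n(k)=\mathbf{u}^*_{s_k}(k-s_k)$ if $k-s_k<N$, else $u_n(k)=\bar u^*_{s_k}+\bar K\bar x^*_{s_k}-\bar K x_n(k)$. Nominal model $x_n(k+1)=Ax_n(k)+Bu_n(k)$. Ancillary controller $u(k)=u_n(k)-K(x(k)-x_n(k))$. The plant sends $X_k=\{x_n(k),s_k\}$. Remote estimator: $\hat x(k+1|k)=A\hat x(k|k)+B\hat u(k|k)$ with $\hat x(k|k)=\gamma_k x_n(k)+(1-\gamma_k)\hat x(k|k-1)$, $\hat u(k|k)=\gamma_k u_n(k)+(1-\gamma_k)\mathbf{u}^*_k(0)$ (with $u_n(k)$ recomputed remotely by the consistent actuator rule from $s_k$), and $q_{k+1}=\gamma_k k+(1-\gamma_k)q_k$. *)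

theory Defs
  imports "HOL-Analysis.Analysis"
begin

definition matpow :: "('a::semiring_1)^'n^'n \<Rightarrow> nat \<Rightarrow> 'a^'n^'n" where
  "matpow M i = ((\<lambda>Y. M ** Y) ^^ i) (mat 1)"

definition cmat :: "real^'n^'m \<Rightarrow> complex^'n^'m" where
  "cmat M = (\<chi> i j. complex_of_real (M $ i $ j))"

definition eigenvalues_c :: "real^'n^'n \<Rightarrow> complex set" where
  "eigenvalues_c M = {l. \<exists>v::complex^'n. v \<noteq> 0 \<and> cmat M *v v = l *s v}"

definition spec_rad :: "real^'n^'n \<Rightarrow> real" where
  "spec_rad M = Sup (cmod ` eigenvalues_c M)"

definition pos_def :: "real^'n^'n \<Rightarrow> bool" where
  "pos_def M \<longleftrightarrow> transpose M = M \<and> (\<forall>x. x \<noteq> 0 \<longrightarrow> 0 < x \<bullet> (M *v x))"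

definition pos_semidef :: "real^'n^'n \<Rightarrow> bool" where
  "pos_semidef M \<longleftrightarrow> transpose M = M \<and> (\<forall>x. 0 \<le> x \<bullet> (M *v x))"

definition msqrt :: "real^'n^'n \<Rightarrow> real^'n^'n" where
  "msqrt Q = (THE S. pos_semidef S \<and> S ** S = Q)"

text \<open>(C,A) observable: the observability matrix [C; CA; ...; CA^(n-1)] has full column rank n,
  i.e. trivial kernel.\<close>
definition observable :: "real^'n^'p \<Rightarrow> real^'n^'n \<Rightarrow> bool" where
  "observable C A \<longleftrightarrow>
     (\<forall>x. (\<forall>i<CARD('n). C *v (matpow A i *v x) = 0) \<longrightarrow> x = 0)"

definition stabilizable :: "real^'n^'n \<Rightarrow> real^'m^'n \<Rightarrow> bool" where
  "stabilizable A B \<longleftrightarrow> (\<exists>F::real^'n^'m. spec_rad (A - B ** F) < 1)"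

definition wnorm2 :: "real^'n^'n \<Rightarrow> real^'n \<Rightarrow> real" where
  "wnorm2 M v = v \<bullet> (M *v v)"

definition mink_series :: "real^'n^'n \<Rightarrow> (real^'n) set \<Rightarrow> (real^'n) set" where
  "mink_series M W = {z. \<exists>w. (\<forall>i. w i \<in> W) \<and> (\<lambda>i. matpow M i *v w i) sums z}"

definition pdiff :: "('a::ab_group_add) set \<Rightarrow> 'a set \<Rightarrow> 'a set" where
  "pdiff X Z = {x. \<forall>z\<in>Z. x + z \<in> X}"

definition aug_step :: "real^'n^'n \<Rightarrow> real^'m^'n \<Rightarrow> real^'n^'m
     \<Rightarrow> (real^'n) \<times> (real^'n) \<times> (real^'m) \<Rightarrow> (real^'n) \<times> (real^'n) \<times> (real^'m)" where
  "aug_step A B Kb = (\<lambda>(xn, xb, ub).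
      ((A - B ** Kb) *v xn + (B ** Kb) *v xb + B *v ub, xb, ub))"

definition Xa_set :: "real^'n^'m \<Rightarrow> (real^'n) set \<Rightarrow> (real^'m) set
     \<Rightarrow> ((real^'n) \<times> (real^'n) \<times> (real^'m)) set" where
  "Xa_set Kb Xc Uc = {(xn, xb, ub). xn \<in> Xc \<and> ub - Kb *v (xn - xb) \<in> Uc}"

definition Xf_set :: "real^'n^'n \<Rightarrow> real^'m^'n \<Rightarrow> real^'n^'m \<Rightarrow> (real^'n) set
     \<Rightarrow> (real^'m) set \<Rightarrow> ((real^'n) \<times> (real^'n) \<times> (real^'m)) set" where
  "Xf_set A B Kb Xc Uc = {xa. \<forall>k. (aug_step A B Kb ^^ k) xa \<in> Xa_set Kb Xc Uc}"

definition Xf_lam :: "real^'n^'n \<Rightarrow> real^'m^'n \<Rightarrow> real^'n^'m \<Rightarrow> (real^'n) set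
     \<Rightarrow> (real^'m) set \<Rightarrow> real \<Rightarrow> ((real^'n) \<times> (real^'n) \<times> (real^'m)) set" where
  "Xf_lam A B Kb Xc Uc lam = Xf_set A B Kb Xc Uc \<inter>
     {(xn, xb, ub). xb \<in> (\<lambda>v. lam *\<^sub>R v) ` Xc \<and> ub \<in> (\<lambda>v. lam *\<^sub>R v) ` Uc}"

fun pred :: "real^'n^'n \<Rightarrow> real^'m^'n \<Rightarrow> real^'n \<Rightarrow> (nat \<Rightarrow> real^'m) \<Rightarrow> nat \<Rightarrow> real^'n" where
  "pred A B x0 v 0 = x0"
| "pred A B x0 v (Suc i) = A *v pred A B x0 v i + B *v v i"

definition mpc_constr where
  "mpc_constr A B Kb Xc Uc lam N x0 v xb ub \<longleftrightarrow>
     (\<forall>i<N. pred A B x0 v i \<in> Xc \<and> v i \<in> Uc) \<and>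
     (pred A B x0 v N, xb, ub) \<in> Xf_lam A B Kb Xc Uc lam \<and>
     A *v xb - xb + B *v ub = 0"

definition mpc_cost where
  "mpc_cost A B Q R P T N xr x0 v xb ub =
     (\<Sum>i<N. wnorm2 Q (pred A B x0 v i - xb) + wnorm2 R (v i - ub))
     + wnorm2 P (pred A B x0 v N - xb) + wnorm2 T (xb - xr)"

definition mpc_feasible where
  "mpc_feasible A B Kb Xc Uc lam N x0 \<longleftrightarrow> (\<exists>v xb ub. mpc_constr A B Kb Xc Uc lam N x0 v xb ub)"

definition mpc_optimal where
  "mpc_optimal A B Kb Xc Uc lam N Q R P T xr x0 v xb ub \<longleftrightarrow>
     mpc_constr A B Kb Xc Uc lam N x0 v xb ub \<and>
     (\<forall>v' xb' ub'. mpc_constr A B Kb Xc Uc lam N x0 v' xb' ub' \<longrightarrow>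
        mpc_cost A B Q R P T N xr x0 v xb ub \<le> mpc_cost A B Q R P T N xr x0 v' xb' ub')"

definition Theta :: "(nat \<Rightarrow> bool) \<Rightarrow> (nat \<Rightarrow> nat) \<Rightarrow> nat \<Rightarrow> bool" where
  "Theta \<theta> q k \<longleftrightarrow> \<theta> k \<and> (\<forall>i. q k < i \<and> i \<le> k \<longrightarrow> \<theta> i)"

definition closed_loop where
  "closed_loop A B K Kb N W feas opt \<theta> \<gamma> w x u xn un s q xh ust xbar ubar \<longleftrightarrow>
     (\<forall>k. w k \<in> W) \<and>
     (\<forall>k. x (Suc k) = A *v x k + B *v u k + w k) \<and>
     (\<forall>k. xn (Suc k) = A *v xn k + B *v un k) \<and>
     (\<forall>k. u k = un k - K *v (x k - xn k)) \<and>
     (\<forall>k. un k = (if k - s k < N then ust (s k) (k - s k)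
                   else ubar (s k) + Kb *v xbar (s k) - Kb *v xn k)) \<and>
     s 0 = 0 \<and>
     (\<forall>k. s (Suc k) = (if Theta \<theta> q (Suc k) then Suc k else s k)) \<and>
     (\<forall>k. xh (Suc k) = A *v (if \<gamma> k then xn k else xh k)
                       + B *v (if \<gamma> k then un k else ust k 0)) \<and>
     (\<forall>k. q (Suc k) = (if \<gamma> k then k else q k)) \<and>
     (\<forall>k. feas (xh k) \<longrightarrow> opt (xh k) (ust k) (xbar k) (ubar k))"

end

theory Submission
  imports Defs
begin


fun trj :: "real^'n^'n \<Rightarrow> real^'m^'n \<Rightarrow> real^'n^'m \<Rightarrow> nat \<Rightarrow> real^'n \<Rightarrow> (nat \<Rightarrow> real^'m)
   \<Rightarrow> real^'n \<Rightarrow> real^'m \<Rightarrow> nat \<Rightarrow> real^'n" where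
  "trj A B Kb N x0 v xb ub 0 = x0"
| "trj A B Kb N x0 v xb ub (Suc m) = A *v trj A B Kb N x0 v xb ub m
     + B *v (if m < N then v m else ub + Kb *v xb - Kb *v trj A B Kb N x0 v xb ub m)"

definition act where
  "act A B Kb N x0 v xb ub m = (if m < N then v m else ub + Kb *v xb - Kb *v trj A B Kb N x0 v xb ub m)"

lemma trj_Suc_act: "trj A B Kb N x0 v xb ub (Suc m) = A *v trj A B Kb N x0 v xb ub m + B *v act A B Kb N x0 v xb ub m"
  by (simp add: act_def)

lemma trj_pred: "m \<le> N \<Longrightarrow> trj A B Kb N x0 v xb ub m = pred A B x0 v m"
  by (induction m) auto

lemma aug_eq: "aug_step A B Kb (x, xb, ub) = (A *v x + B *v (ub + Kb *v xb - Kb *v x), xb, ub)"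
  by (simp add: aug_step_def algebra_simps matrix_vector_mul_assoc)

lemma trj_aug: "trj A B Kb N x0 v xb ub (N + d) = fst ((aug_step A B Kb ^^ d) (pred A B x0 v N, xb, ub))
   \<and> snd ((aug_step A B Kb ^^ d) (pred A B x0 v N, xb, ub)) = (xb, ub)"
proof (induction d)
  case 0
  then show ?case by (simp add: trj_pred)
next
  case (Suc d)
  obtain a b c where abc: "(aug_step A B Kb ^^ d) (pred A B x0 v N, xb, ub) = (a, b, c)"
    by (metis prod.exhaust)
  with Suc show ?case by (simp add: aug_eq)
qed

lemma trj_aug': "(trj A B Kb N x0 v xb ub (N + d), xb, ub) = (aug_step A B Kb ^^ d) (pred A B x0 v N, xb, ub)"
  using trj_aug[of A B Kb N x0 v xb ub d] by (metis prod.collapse)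

lemma constr_traj:
  assumes "mpc_constr A B Kb Xc Uc lam N x0 v xb ub"
  shows "trj A B Kb N x0 v xb ub m \<in> Xc \<and> act A B Kb N x0 v xb ub m \<in> Uc"
proof (cases "m < N")
  case True
  then show ?thesis using assms by (simp add: mpc_constr_def act_def trj_pred)
next
  case False
  then obtain d where d: "m = N + d" by (metis le_Suc_ex not_less)
  have "(pred A B x0 v N, xb, ub) \<in> Xf_set A B Kb Xc Uc"
    using assms by (simp add: mpc_constr_def Xf_lam_def)
  then have "(aug_step A B Kb ^^ d) (pred A B x0 v N, xb, ub) \<in> Xa_set Kb Xc Uc"
    by (simp add: Xf_set_def)
  then have "(trj A B Kb N x0 v xb ub m, xb, ub) \<in> Xa_set Kb Xc Uc"
    using trj_aug'[of A B Kb N x0 v xb ub d] d by simp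
  then show ?thesis using False by (simp add: Xa_set_def act_def algebra_simps)
qed

lemma pred_shift: "pred A B (trj A B Kb N x0 v xb ub m) (\<lambda>i. act A B Kb N x0 v xb ub (m + i)) i
   = trj A B Kb N x0 v xb ub (m + i)"
proof (induction i)
  case 0 then show ?case by simp
next
  case (Suc i) then show ?case by (simp del: trj.simps add: trj_Suc_act)
qed

lemma constr_shift:
  assumes "mpc_constr A B Kb Xc Uc lam N x0 v xb ub"
  shows "mpc_constr A B Kb Xc Uc lam N (trj A B Kb N x0 v xb ub m) (\<lambda>i. act A B Kb N x0 v xb ub (m + i)) xb ub"
proof -
  have Xf: "(pred A B x0 v N, xb, ub) \<in> Xf_lam A B Kb Xc Uc lam"
    using assms by (simp add: mpc_constr_def)
  have "(trj A B Kb N x0 v xb ub (N + m), xb, ub) \<in> Xf_lam A B Kb Xc Uc lam"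
  proof -
    have "\<forall>k. (aug_step A B Kb ^^ k) ((aug_step A B Kb ^^ m) (pred A B x0 v N, xb, ub)) \<in> Xa_set Kb Xc Uc"
    proof
      fix k
      have "(aug_step A B Kb ^^ k) ((aug_step A B Kb ^^ m) (pred A B x0 v N, xb, ub))
          = (aug_step A B Kb ^^ (k + m)) (pred A B x0 v N, xb, ub)" by (simp add: funpow_add)
      then show "(aug_step A B Kb ^^ k) ((aug_step A B Kb ^^ m) (pred A B x0 v N, xb, ub)) \<in> Xa_set Kb Xc Uc"
        using Xf by (simp add: Xf_lam_def Xf_set_def)
    qed
    then show ?thesis using Xf trj_aug'[of A B Kb N x0 v xb ub m]
      by (simp add: Xf_lam_def Xf_set_def del: Product_Type.prod.inject) (metis case_prod_conv)
  qed
  then have "(trj A B Kb N x0 v xb ub (m + N), xb, ub) \<in> Xf_lam A B Kb Xc Uc lam"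
    by (simp add: add.commute)
  then show ?thesis using assms constr_traj[OF assms]
    by (simp add: mpc_constr_def pred_shift)
qed

lemma mink_inv:
  assumes "e \<in> mink_series M W" "d \<in> W"
  shows "M *v e + d \<in> mink_series M W"
proof -
  obtain w where w: "\<forall>i. w i \<in> W" "(\<lambda>i. matpow M i *v w i) sums e"
    using assms(1) by (auto simp: mink_series_def)
  define w' where "w' = (\<lambda>i. case i of 0 \<Rightarrow> d | Suc j \<Rightarrow> w j)"
  have "(\<lambda>i. M *v (matpow M i *v w i)) sums (M *v e)"
    by (rule bounded_linear.sums[OF matrix_vector_mul_bounded_linear w(2)])
  moreover have "\<And>i. M *v (matpow M i *v w i) = matpow M (Suc i) *v w' (Suc i)"
    by (simp add: w'_def matpow_def matrix_vector_mul_assoc)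
  ultimately have "(\<lambda>i. matpow M (Suc i) *v w' (Suc i)) sums (M *v e)" by simp
  then have "(\<lambda>i. matpow M i *v w' i) sums (M *v e + matpow M 0 *v w' 0)"
    using sums_Suc_iff[of "\<lambda>i. matpow M i *v w' i"] by simp
  then have "(\<lambda>i. matpow M i *v w' i) sums (M *v e + d)"
    by (simp add: matpow_def w'_def)
  moreover have "\<forall>i. w' i \<in> W" using w(1) assms(2) by (simp add: w'_def split: nat.split)
  ultimately show ?thesis by (auto simp: mink_series_def)
qed


lemma neg_mat_vec: "(- K) *v (v::real^'n) = - (K *v v)" for K :: "real^'n^'m"
  by (simp add: vec_eq_iff matrix_vector_mult_def sum_negf)


lemma main_inv:
  fixes A :: "real^'n^'n" and B :: "real^'m^'n" and K Kb :: "real^'n^'m"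
    and Q P T :: "real^'n^'n" and R :: "real^'m^'m"
    and W Z Xc :: "(real^'n) set" and Uc :: "(real^'m) set"
    and lam :: real and N :: nat and xr :: "real^'n"
    and \<theta> \<gamma> :: "nat \<Rightarrow> bool"
    and w x xn xh xbar :: "nat \<Rightarrow> real^'n"
    and u un ubar :: "nat \<Rightarrow> real^'m"
    and s q :: "nat \<Rightarrow> nat"
    and ust :: "nat \<Rightarrow> nat \<Rightarrow> real^'m"
  assumes CL: "closed_loop A B K Kb N W (mpc_feasible A B Kb Xc Uc lam N)
       (mpc_optimal A B Kb Xc Uc lam N Q R P T xr) \<theta> \<gamma> w x u xn un s q xh ust xbar ubar"
    and N: "0 < N"
    and Zinv: "\<forall>e\<in>Z. \<forall>d\<in>W. (A - B ** K) *v e + d \<in> Z"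
    and k0: "1 \<le> k0" "\<gamma> (k0 - 1)" "\<theta> k0" "x k0 - xn k0 \<in> Z"
       "mpc_feasible A B Kb Xc Uc lam N (xh k0)"
  shows "\<forall>k\<ge>k0. k0 \<le> s k \<and> s k \<le> k \<and>
      mpc_constr A B Kb Xc Uc lam N (xn (s k)) (ust (s k)) (xbar (s k)) (ubar (s k)) \<and>
      xn k = trj A B Kb N (xn (s k)) (ust (s k)) (xbar (s k)) (ubar (s k)) (k - s k) \<and>
      un k = act A B Kb N (xn (s k)) (ust (s k)) (xbar (s k)) (ubar (s k)) (k - s k) \<and>
      mpc_feasible A B Kb Xc Uc lam N (xh k) \<and> x k - xn k \<in> Z \<and> q k < k \<and>
      ((\<forall>i. q k < i \<and> i \<le> k \<longrightarrow> \<theta> i) \<longrightarrow> xh k = xn k)"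
proof -
  let ?F = "mpc_feasible A B Kb Xc Uc lam N"
  let ?C = "mpc_constr A B Kb Xc Uc lam N"
  note cl = CL[unfolded closed_loop_def]
  have wW: "\<And>k. w k \<in> W" using cl by blast
  have xS: "\<And>k. x (Suc k) = A *v x k + B *v u k + w k" using cl by blast
  have xnS: "\<And>k. xn (Suc k) = A *v xn k + B *v un k" using cl by blast
  have uk: "\<And>k. u k = un k - K *v (x k - xn k)" using cl by blast
  have unk: "\<And>k. un k = (if k - s k < N then ust (s k) (k - s k)
                   else ubar (s k) + Kb *v xbar (s k) - Kb *v xn k)" using cl by blast
  have sS: "\<And>k. s (Suc k) = (if Theta \<theta> q (Suc k) then Suc k else s k)" using cl by blast
  have xhS: "\<And>k. xh (Suc k) = A *v (if \<gamma> k then xn k else xh k)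
                       + B *v (if \<gamma> k then un k else ust k 0)" using cl by blast
  have qS: "\<And>k. q (Suc k) = (if \<gamma> k then k else q k)" using cl by blast
  have opt: "\<And>k. ?F (xh k) \<Longrightarrow> ?C (xh k) (ust k) (xbar k) (ubar k)"
    using cl by (simp add: mpc_optimal_def)
  have feasI: "\<And>x0 v xb ub. ?C x0 v xb ub \<Longrightarrow> ?F x0"
    by (auto simp: mpc_feasible_def)
  have un_act: "\<And>k. xn k = trj A B Kb N (xn (s k)) (ust (s k)) (xbar (s k)) (ubar (s k)) (k - s k)
     \<Longrightarrow> un k = act A B Kb N (xn (s k)) (ust (s k)) (xbar (s k)) (ubar (s k)) (k - s k)"
    using unk by (simp add: act_def)
  define INV where "INV k \<longleftrightarrow> k0 \<le> s k \<and> s k \<le> k \<and>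
      ?C (xn (s k)) (ust (s k)) (xbar (s k)) (ubar (s k)) \<and>
      xn k = trj A B Kb N (xn (s k)) (ust (s k)) (xbar (s k)) (ubar (s k)) (k - s k) \<and>
      ?F (xh k) \<and> x k - xn k \<in> Z \<and> q k < k \<and>
      ((\<forall>i. q k < i \<and> i \<le> k \<longrightarrow> \<theta> i) \<longrightarrow> xh k = xn k)" for k
  have k0S: "k0 = Suc (k0 - 1)" using k0(1) by simp
  have base0: "INV k0"
  proof -
    have q0: "q k0 = k0 - 1" using qS[of "k0 - 1"] k0(2) k0S by simp
    have Th: "Theta \<theta> q k0"
      unfolding Theta_def using q0 k0(3) by (metis Suc_leI k0S le_antisym)
    have s0: "s k0 = k0" using sS[of "k0 - 1"] Th k0S by simp
    have xh0: "xh k0 = xn k0" using xhS[of "k0 - 1"] xnS[of "k0 - 1"] k0(2) k0S by simp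
    show ?thesis unfolding INV_def using s0 xh0 q0 k0 opt[of k0] by simp
  qed
  have step0: "INV (Suc k)" if kk: "k0 \<le> k" and I: "INV k" for k
  proof -
    define j where "j = s k"
    define m where "m = k - j"
    have jk: "k0 \<le> j" "j \<le> k" using I unfolding INV_def j_def by blast+
    have Cj: "?C (xn j) (ust j) (xbar j) (ubar j)" using I unfolding INV_def j_def by blast
    have xnk: "xn k = trj A B Kb N (xn j) (ust j) (xbar j) (ubar j) m"
      using I unfolding INV_def j_def m_def by blast
    have unkk: "un k = act A B Kb N (xn j) (ust j) (xbar j) (ubar j) m"
      using un_act[of k] xnk by (simp add: j_def m_def)
    have xnSk: "xn (Suc k) = trj A B Kb N (xn j) (ust j) (xbar j) (ubar j) (Suc m)"
      using xnS[of k] xnk unkk trj_Suc_act by metis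
    have Fk: "?F (xh k)" using I unfolding INV_def by blast
    have ek: "x k - xn k \<in> Z" using I unfolding INV_def by blast
    have qk: "q k < k" using I unfolding INV_def by blast
    have eS: "x (Suc k) - xn (Suc k) = (A - B ** K) *v (x k - xn k) + w k"
      by (simp add: xS xnS uk algebra_simps matrix_vector_mul_assoc[symmetric])
    have eS': "x (Suc k) - xn (Suc k) \<in> Z" using eS Zinv ek wW by simp
    have qS': "q (Suc k) < Suc k" using qS[of k] qk by simp
    have xh_eq: "(\<forall>i. q (Suc k) < i \<and> i \<le> Suc k \<longrightarrow> \<theta> i) \<longrightarrow> xh (Suc k) = xn (Suc k)"
    proof
      assume H: "\<forall>i. q (Suc k) < i \<and> i \<le> Suc k \<longrightarrow> \<theta> i"
      show "xh (Suc k) = xn (Suc k)"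
      proof (cases "\<gamma> k")
        case True
        then show ?thesis using xhS[of k] xnS[of k] by simp
      next
        case False
        then have qq: "q (Suc k) = q k" using qS by simp
        have H': "\<forall>i. q k < i \<and> i \<le> k \<longrightarrow> \<theta> i" using H qq by auto
        then have xhk: "xh k = xn k" using I unfolding INV_def by blast
        have Th: "Theta \<theta> q k" using H' qk by (simp add: Theta_def)
        have kS: "k = Suc (k - 1)" using kk k0(1) by simp
        have sk: "s k = k" using sS[of "k - 1"] Th kS by simp
        have "un k = ust k 0" using unk[of k] sk N by simp
        then show ?thesis using xhS[of k] xnS[of k] False xhk by simp
      qed
    qed
    have FS: "?F (xh (Suc k))"
    proof (cases "\<gamma> k")
      case True
      then have "xh (Suc k) = xn (Suc k)" using xhS[of k] xnS[of k] by simp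
      then show ?thesis using constr_shift[OF Cj, of "Suc m"] xnSk feasI by metis
    next
      case False
      have Ck: "?C (xh k) (ust k) (xbar k) (ubar k)" using opt Fk by blast
      have "trj A B Kb N (xh k) (ust k) (xbar k) (ubar k) (Suc 0) = xh (Suc k)"
        using xhS[of k] False N by simp
      then show ?thesis using constr_shift[OF Ck, of "Suc 0"] feasI by metis
    qed
    show ?thesis
    proof (cases "Theta \<theta> q (Suc k)")
      case True
      then have sk: "s (Suc k) = Suc k" using sS by simp
      have "xh (Suc k) = xn (Suc k)" using xh_eq True by (auto simp: Theta_def)
      then show ?thesis using True sk opt[of "Suc k"] FS eS' qS' xh_eq kk
        unfolding INV_def by simp
    next
      case False
      then have sk: "s (Suc k) = j" using sS j_def by simp
      have "Suc k - j = Suc m" using jk m_def by simp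
      then show ?thesis using sk jk Cj xnSk FS eS' qS' xh_eq unfolding INV_def by simp
    qed
  qed
  have "INV k" if "k0 \<le> k" for k
    using that
  proof (induction k rule: dec_induct)
    case base then show ?case by (rule base0)
  next
    case (step k) then show ?case using step0 by blast
  qed
  then show ?thesis using un_act unfolding INV_def by blast
qed


theorem proposition2:
  fixes A :: "real^'n^'n" and B :: "real^'m^'n" and K Kb :: "real^'n^'m"
    and Q P T :: "real^'n^'n" and R :: "real^'m^'m"
    and Hx :: "real^'n^'px" and hx :: "real^'px"
    and Hu :: "real^'m^'pu" and hu :: "real^'pu"
    and Hw :: "real^'n^'pw" and hw :: "real^'pw"
    and X W :: "(real^'n) set" and U :: "(real^'m) set"
    and lam :: real and N :: nat and xr :: "real^'n"
    and M :: "'w measure" and \<theta> \<gamma> :: "'w \<Rightarrow> nat \<Rightarrow> bool"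
    and w x xn xh xbar :: "'w \<Rightarrow> nat \<Rightarrow> real^'n"
    and u un ubar :: "'w \<Rightarrow> nat \<Rightarrow> real^'m"
    and s q :: "'w \<Rightarrow> nat \<Rightarrow> nat"
    and ust :: "'w \<Rightarrow> nat \<Rightarrow> nat \<Rightarrow> real^'m"
  assumes X_def: "X = {v. \<forall>i. (Hx *v v) $ i \<le> hx $ i}"
    and U_def: "U = {v. \<forall>i. (Hu *v v) $ i \<le> hu $ i}"
    and W_def: "W = {v. \<forall>i. (Hw *v v) $ i \<le> hw $ i}"
    and "compact W" and "0 \<in> interior W"
    and "bounded X" and "0 \<in> interior X"
    and "bounded U" and "0 \<in> interior U"
    and "stabilizable A B"
    and "pos_def Q" and "pos_def R" and "pos_def T"
    and "observable (msqrt Q) A"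
    and "spec_rad (A - B ** K) < 1" and "spec_rad (A - B ** Kb) < 1"
    and "P = transpose (A - B ** Kb) ** P ** (A - B ** Kb) + Q + transpose Kb ** R ** Kb"
    and "0 < lam" and "lam < 1" and "0 < N"
    and "emeasure M (space M) = 1"
    and "\<forall>t. {\<omega> \<in> space M. \<theta> \<omega> t} \<in> sets M"
    and "\<forall>t. {\<omega> \<in> space M. \<gamma> \<omega> t} \<in> sets M"
    and "\<forall>k. measure M {\<omega> \<in> space M. \<forall>t\<ge>Suc k. \<not> (\<gamma> \<omega> (t - 1) \<and> \<theta> \<omega> t)} = 0"
    and "\<forall>\<omega>\<in>space M. closed_loop A B K Kb N W
           (mpc_feasible A B Kb (pdiff X (mink_series (A - B ** K) W))
              (pdiff U ((\<lambda>z. (- K) *v z) ` mink_series (A - B ** K) W)) lam N)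
           (mpc_optimal A B Kb (pdiff X (mink_series (A - B ** K) W))
              (pdiff U ((\<lambda>z. (- K) *v z) ` mink_series (A - B ** K) W)) lam N Q R P T xr)
           (\<theta> \<omega>) (\<gamma> \<omega>) (w \<omega>) (x \<omega>) (u \<omega>) (xn \<omega>) (un \<omega>) (s \<omega>) (q \<omega>)
           (xh \<omega>) (ust \<omega>) (xbar \<omega>) (ubar \<omega>)"
  shows "\<forall>\<omega>\<in>space M. \<forall>k0.
           (1 \<le> k0 \<and> \<gamma> \<omega> (k0 - 1) \<and> \<theta> \<omega> k0 \<and>
            x \<omega> k0 - xn \<omega> k0 \<in> mink_series (A - B ** K) W \<and>
            mpc_feasible A B Kb (pdiff X (mink_series (A - B ** K) W))
              (pdiff U ((\<lambda>z. (- K) *v z) ` mink_series (A - B ** K) W)) lam N (xh \<omega> k0))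
           \<longrightarrow> (\<forall>k\<ge>k0. mpc_feasible A B Kb (pdiff X (mink_series (A - B ** K) W))
                          (pdiff U ((\<lambda>z. (- K) *v z) ` mink_series (A - B ** K) W)) lam N (xh \<omega> k)
                        \<and> x \<omega> k \<in> X \<and> u \<omega> k \<in> U)"
proof (rule ballI, rule allI, rule impI)
  fix \<omega> k0
  assume om: "\<omega> \<in> space M"
  assume H: "1 \<le> k0 \<and> \<gamma> \<omega> (k0 - 1) \<and> \<theta> \<omega> k0 \<and>
            x \<omega> k0 - xn \<omega> k0 \<in> mink_series (A - B ** K) W \<and>
            mpc_feasible A B Kb (pdiff X (mink_series (A - B ** K) W))
              (pdiff U ((\<lambda>z. (- K) *v z) ` mink_series (A - B ** K) W)) lam N (xh \<omega> k0)"
  define Z where "Z = mink_series (A - B ** K) W"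
  have Zinv: "\<forall>e\<in>Z. \<forall>d\<in>W. (A - B ** K) *v e + d \<in> Z"
    unfolding Z_def using mink_inv by blast
  have CL: "closed_loop A B K Kb N W
           (mpc_feasible A B Kb (pdiff X Z) (pdiff U ((\<lambda>z. (- K) *v z) ` Z)) lam N)
           (mpc_optimal A B Kb (pdiff X Z) (pdiff U ((\<lambda>z. (- K) *v z) ` Z)) lam N Q R P T xr)
           (\<theta> \<omega>) (\<gamma> \<omega>) (w \<omega>) (x \<omega>) (u \<omega>) (xn \<omega>) (un \<omega>) (s \<omega>) (q \<omega>)
           (xh \<omega>) (ust \<omega>) (xbar \<omega>) (ubar \<omega>)"
    using assms(25) om unfolding Z_def by blast
  note inv = main_inv[OF CL \<open>0 < N\<close> Zinv, of k0] H[folded Z_def]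
  show "\<forall>k\<ge>k0. mpc_feasible A B Kb (pdiff X (mink_series (A - B ** K) W))
                          (pdiff U ((\<lambda>z. (- K) *v z) ` mink_series (A - B ** K) W)) lam N (xh \<omega> k)
                        \<and> x \<omega> k \<in> X \<and> u \<omega> k \<in> U"
  proof (intro allI impI)
    fix k assume kk: "k0 \<le> k"
    let ?j = "s \<omega> k"
    have I: "mpc_constr A B Kb (pdiff X Z) (pdiff U ((\<lambda>z. (- K) *v z) ` Z)) lam N
          (xn \<omega> ?j) (ust \<omega> ?j) (xbar \<omega> ?j) (ubar \<omega> ?j)"
      "xn \<omega> k = trj A B Kb N (xn \<omega> ?j) (ust \<omega> ?j) (xbar \<omega> ?j) (ubar \<omega> ?j) (k - ?j)"
      "un \<omega> k = act A B Kb N (xn \<omega> ?j) (ust \<omega> ?j) (xbar \<omega> ?j) (ubar \<omega> ?j) (k - ?j)"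
      "mpc_feasible A B Kb (pdiff X Z) (pdiff U ((\<lambda>z. (- K) *v z) ` Z)) lam N (xh \<omega> k)"
      "x \<omega> k - xn \<omega> k \<in> Z"
      using inv kk by blast+
    have xnX: "xn \<omega> k \<in> pdiff X Z" and unU: "un \<omega> k \<in> pdiff U ((\<lambda>z. (- K) *v z) ` Z)"
      using constr_traj[OF I(1), of "k - ?j"] I(2,3) by simp_all
    have "x \<omega> k = xn \<omega> k + (x \<omega> k - xn \<omega> k)" by simp
    then have xX: "x \<omega> k \<in> X" using xnX I(5) unfolding pdiff_def by (metis (mono_tags, lifting) mem_Collect_eq)
    have uk: "u \<omega> k = un \<omega> k - K *v (x \<omega> k - xn \<omega> k)"
      using CL unfolding closed_loop_def by blast
    have "(- K) *v (x \<omega> k - xn \<omega> k) = - (K *v (x \<omega> k - xn \<omega> k))"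
      by (simp add: neg_mat_vec)
    then have "u \<omega> k = un \<omega> k + (- K) *v (x \<omega> k - xn \<omega> k)" using uk by simp
    then have uU: "u \<omega> k \<in> U" using unU I(5) unfolding pdiff_def by auto
    show "mpc_feasible A B Kb (pdiff X (mink_series (A - B ** K) W))
                          (pdiff U ((\<lambda>z. (- K) *v z) ` mink_series (A - B ** K) W)) lam N (xh \<omega> k)
                        \<and> x \<omega> k \<in> X \<and> u \<omega> k \<in> U"
      using I(4) xX uU unfolding Z_def by blast
  qed
qed

end
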